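(* Let $(X,T)$ be a dynamical system and $\mathcal{F}$ a family admitting a countable base. Then $\mathrm{Tran}_{k\mathcal{F}}(X,T)$ is a $G_\delta$ subset of $X$. Moreover, the following are equivalent: (1) $(X,T)$ is $k\mathcal{F}$-transitive; (2) $\mathrm{Tran}_{k\mathcal{F}}(X,T)$ is a dense $G_\delta$ subset of $X$; (3) $\mathrm{Tran}_{k\mathcal{F}}(X,T)\neq\varnothing$.
   Context: A dynamical system $(X,T)$: $X$ is a compact metric space with more than one point and without isolated points, $T:X\to X$ a continuous surjection. A family is a collection of subsets of $\mathbb{Z}_+$ that is hereditary upward. A countable base of $\mathcal{F}$ is a countable $\mathcal{H}\subset\mathcal{F}$ such that every $F\in\mathcal{F}$ contains some $H\in\mathcal{H}$. The dual family is $k\mathcal{F}=\{F\subset\mathbb{Z}_+:F\cap F'\neq\varnothing\ \forall F'\in\mathcal{F}\}$. "Opene" means open and nonempty. $n_T(x,U)=\{n\in\mathbb{Z}_+:T^nx\in U\}$, $N_T(U,V)=\{n\in\mathbb{Z}_+:U\cap T^{-n}V\neq\varnothing\}$. For a family $\mathcal{G}$, $\mathrm{Tran}_{\mathcal{G}}(X,T)=\{x\in X:n_T(x,U)\in\mathcal{G}\text{ for every opene }U\}$, and $(X,T)$ is $\mathcal{G}$-transitive if $N_T(U,V)\in\mathcal{G}$ for all opene $U,V$. *)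

theory Defs
  imports "HOL-Analysis.Analysis"
begin

definition is_family :: "nat set set \<Rightarrow> bool" where
  "is_family F \<longleftrightarrow> (\<forall>A\<in>F. \<forall>B. A \<subseteq> B \<longrightarrow> B \<in> F)"

definition has_countable_base :: "nat set set \<Rightarrow> bool" where
  "has_countable_base F \<longleftrightarrow>
     (\<exists>H. countable H \<and> H \<subseteq> F \<and> (\<forall>A\<in>F. \<exists>B\<in>H. B \<subseteq> A))"

definition dual_family :: "nat set set \<Rightarrow> nat set set" where
  "dual_family F = {A. \<forall>B\<in>F. A \<inter> B \<noteq> {}}"

definition dyn_system :: "'a::metric_space set \<Rightarrow> ('a \<Rightarrow> 'a) \<Rightarrow> bool" where
  "dyn_system X T \<longleftrightarrow> compact X \<and> (\<exists>x\<in>X. \<exists>y\<in>X. x \<noteq> y) \<and> (\<forall>x\<in>X. x islimpt X) \<and>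
     continuous_on X T \<and> T ` X = X"

definition n_T :: "('a \<Rightarrow> 'a) \<Rightarrow> 'a \<Rightarrow> 'a set \<Rightarrow> nat set" where
  "n_T T x U = {n. (T ^^ n) x \<in> U}"

definition N_T :: "('a \<Rightarrow> 'a) \<Rightarrow> 'a set \<Rightarrow> 'a set \<Rightarrow> nat set" where
  "N_T T U V = {n. U \<inter> (T ^^ n) -` V \<noteq> {}}"

definition Tran :: "nat set set \<Rightarrow> 'a::metric_space set \<Rightarrow> ('a \<Rightarrow> 'a) \<Rightarrow> 'a set" where
  "Tran G X T = {x\<in>X. \<forall>U. openin (top_of_set X) U \<and> U \<noteq> {} \<longrightarrow> n_T T x U \<in> G}"

definition transitive_wrt :: "nat set set \<Rightarrow> 'a::metric_space set \<Rightarrow> ('a \<Rightarrow> 'a) \<Rightarrow> bool" where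
  "transitive_wrt G X T \<longleftrightarrow> (\<forall>U V. openin (top_of_set X) U \<and> U \<noteq> {} \<and>
      openin (top_of_set X) V \<and> V \<noteq> {} \<longrightarrow> N_T T U V \<in> G)"

end

theory Submission
  imports Defs
begin

lemma iter_props:
  assumes "continuous_on X T" "T ` X = X"
  shows "continuous_on X (T^^n) \<and> (T^^n) ` X = X"
proof (induction n)
  case 0 then show ?case by (simp add: continuous_on_id)
next
  case (Suc n)
  then have c: "continuous_on X (T ^^ n)" and i: "(T^^n) ` X = X" by auto
  have "continuous_on X (T \<circ> (T^^n))"
    by (rule continuous_on_compose) (use c i assms in auto)
  moreover have "(T \<circ> (T^^n)) ` X = X" using i assms by (simp add: image_comp[symmetric] del: o_apply)
  ultimately show ?case by simp
qed

lemma countable_opene_base: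
  fixes X :: "'a::metric_space set"
  assumes "compact X"
  obtains \<B> where "countable \<B>" "\<And>B. B \<in> \<B> \<Longrightarrow> openin (top_of_set X) B \<and> B \<noteq> {}"
    "\<And>U. openin (top_of_set X) U \<Longrightarrow> U \<noteq> {} \<Longrightarrow> \<exists>B\<in>\<B>. B \<subseteq> U"
proof -
  have tb: "\<forall>\<epsilon>>0. \<exists>k. finite k \<and> k \<subseteq> X \<and> X \<subseteq> (\<Union>x\<in>k. ball x \<epsilon>)"
    by (rule seq_compact_imp_totally_bounded) (use assms compact_imp_seq_compact in auto)
  then have "\<forall>k::nat. \<exists>C. finite C \<and> C \<subseteq> X \<and> X \<subseteq> (\<Union>x\<in>C. ball x (1/ Suc k))"
    by simp
  then obtain C where C: "\<And>k. finite (C k) \<and> C k \<subseteq> X \<and> X \<subseteq> (\<Union>x\<in>C k. ball x (1/ Suc k))"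
    by metis
  define \<B> where "\<B> = (\<Union>k. (\<lambda>c. X \<inter> ball c (1 / Suc k)) ` C k)"
  have "countable \<B>" unfolding \<B>_def
  proof (rule countable_UN)
    fix k :: nat show "countable ((\<lambda>c. X \<inter> ball c (1 / Suc k)) ` C k)"
      using C[of k] by (intro countable_finite finite_imageI) auto
  qed simp
  moreover have "openin (top_of_set X) B \<and> B \<noteq> {}" if "B \<in> \<B>" for B
    using that C unfolding \<B>_def by (force simp: openin_open_Int)
  moreover have "\<exists>B\<in>\<B>. B \<subseteq> U" if U: "openin (top_of_set X) U" "U \<noteq> {}" for U
  proof -
    obtain x where x: "x \<in> U" using U by auto
    obtain e where e: "e > 0" "\<And>y. y \<in> X \<Longrightarrow> dist y x < e \<Longrightarrow> y \<in> U"
      using U(1) x by (force simp: openin_euclidean_subtopology_iff)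
    obtain k::nat where k: "inverse (Suc k) < e/2"
      using reals_Archimedean[of "e/2"] e by auto
    have "x \<in> X" using U x openin_subset by fastforce
    then obtain c where c: "c \<in> C k" "x \<in> ball c (1/Suc k)" using C[of k] by blast
    have "X \<inter> ball c (1 / Suc k) \<subseteq> U"
    proof
      fix y assume y: "y \<in> X \<inter> ball c (1 / Suc k)"
      have "dist y x \<le> dist y c + dist c x" by (rule dist_triangle)
      also have "\<dots> < e"
      proof -
        have "dist y c < 1/Suc k" "dist c x < 1/Suc k" using y c by (auto simp: dist_commute)
        moreover have "1/Suc k < e/2" using k by (simp add: inverse_eq_divide)
        ultimately show ?thesis by linarith
      qed
      finally show "y \<in> U" using e y by auto
    qed
    then show ?thesis using c unfolding \<B>_def by blast
  qed
  ultimately show ?thesis using that by blast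
qed


theorem proposition3p3:
  fixes X :: "'a::metric_space set" and T :: "'a \<Rightarrow> 'a" and F :: "nat set set"
  assumes "dyn_system X T" and "is_family F" and "has_countable_base F"
  shows "gdelta_in (top_of_set X) (Tran (dual_family F) X T)
       \<and> (transitive_wrt (dual_family F) X T
            \<longleftrightarrow> (gdelta_in (top_of_set X) (Tran (dual_family F) X T) \<and>
                 (top_of_set X) closure_of (Tran (dual_family F) X T) = X))
       \<and> ((gdelta_in (top_of_set X) (Tran (dual_family F) X T) \<and>
                 (top_of_set X) closure_of (Tran (dual_family F) X T) = X)
            \<longleftrightarrow> Tran (dual_family F) X T \<noteq> {})"
proof -
  let ?D = "dual_family F"
  let ?Tr = "Tran ?D X T"
  have cX: "compact X" and cont: "continuous_on X T" and surj: "T ` X = X"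
    and ex2: "\<exists>x\<in>X. \<exists>y\<in>X. x \<noteq> y"
    using assms(1) unfolding dyn_system_def by blast+
  have Xne: "X \<noteq> {}" using ex2 by blast
  have iter: "\<And>n. continuous_on X (T^^n) \<and> (T^^n) ` X = X"
    using iter_props[OF cont surj] by blast
  have inX: "\<And>n x. x \<in> X \<Longrightarrow> (T^^n) x \<in> X" by (metis iter imageI)
  obtain \<H> where H: "countable \<H>" "\<H> \<subseteq> F" "\<And>A. A \<in> F \<Longrightarrow> \<exists>B\<in>\<H>. B \<subseteq> A"
  proof -
    from assms(3) obtain H0 where "countable H0 \<and> H0 \<subseteq> F \<and> (\<forall>A\<in>F. \<exists>B\<in>H0. B \<subseteq> A)"
      unfolding has_countable_base_def by blast
    then show ?thesis by (intro that[of H0]) auto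
  qed
  obtain \<B> where B: "countable \<B>" "\<And>B. B \<in> \<B> \<Longrightarrow> openin (top_of_set X) B \<and> B \<noteq> {}"
    "\<And>U. openin (top_of_set X) U \<Longrightarrow> U \<noteq> {} \<Longrightarrow> \<exists>B\<in>\<B>. B \<subseteq> U"
    using countable_opene_base[OF cX] by metis
  have Dup: "\<And>A C. A \<in> ?D \<Longrightarrow> A \<subseteq> C \<Longrightarrow> C \<in> ?D" by (auto simp: dual_family_def)
  define G where "G B H = {x\<in>X. \<exists>n\<in>H. (T^^n) x \<in> B}" for B H
  have Gopen: "openin (top_of_set X) (G B H)" if "B \<in> \<B>" for B H
  proof -
    have "G B H = (\<Union>n\<in>H. X \<inter> (T^^n) -` B)" unfolding G_def by auto
    moreover have "openin (top_of_set X) (X \<inter> (T^^n) -` B)" for n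
      by (rule continuous_openin_preimage[of X "T^^n" X]) (use iter inX B(2)[OF that] in auto)
    ultimately show ?thesis
      by (metis (no_types, lifting) imageE openin_Union)
  qed
  define \<G> where "\<G> = insert X ((\<lambda>(B,H). G B H) ` (\<B> \<times> \<H>))"
  have cnt: "countable \<G>" unfolding \<G>_def using B(1) H(1) by auto
  have Gop: "openin (top_of_set X) S" if "S \<in> \<G>" for S
    using that Gopen unfolding \<G>_def by auto
  have TrEq: "?Tr = \<Inter>\<G>"
  proof
    show "?Tr \<subseteq> \<Inter>\<G>"
    proof
      fix x assume x: "x \<in> ?Tr"
      then have xX: "x \<in> X" by (simp add: Tran_def)
      have "x \<in> G B H" if "B \<in> \<B>" "H \<in> \<H>" for B H
      proof -
        have "n_T T x B \<in> ?D" using x B(2)[OF that(1)] by (simp add: Tran_def)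
        then have "n_T T x B \<inter> H \<noteq> {}" using H(2) that(2) by (auto simp: dual_family_def)
        then show ?thesis using xX by (auto simp: G_def n_T_def)
      qed
      then show "x \<in> \<Inter>\<G>" using xX unfolding \<G>_def by auto
    qed
  next
    show "\<Inter>\<G> \<subseteq> ?Tr"
    proof
      fix x assume x: "x \<in> \<Inter>\<G>"
      then have xX: "x \<in> X" unfolding \<G>_def by auto
      have xG: "x \<in> G B H" if "B \<in> \<B>" "H \<in> \<H>" for B H
        using x that unfolding \<G>_def by auto
      have "n_T T x U \<in> ?D" if U: "openin (top_of_set X) U" "U \<noteq> {}" for U
        unfolding dual_family_def
      proof (intro CollectI ballI)
        fix A assume "A \<in> F"
        then obtain H where "H \<in> \<H>" "H \<subseteq> A" using H(3) by blast
        moreover obtain B where "B \<in> \<B>" "B \<subseteq> U" using B(3)[OF U] by blast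
        ultimately show "n_T T x U \<inter> A \<noteq> {}" using xG unfolding G_def n_T_def by blast
      qed
      then show "x \<in> ?Tr" using xX by (simp add: Tran_def)
    qed
  qed
  have gd: "gdelta_in (top_of_set X) ?Tr"
    unfolding TrEq
  proof (rule gdelta_in_Inter)
    show "countable \<G>" by (rule cnt)
    show "\<G> \<noteq> {}" by (simp add: \<G>_def)
    show "gdelta_in (top_of_set X) S" if "S \<in> \<G>" for S
      using open_imp_gdelta_in Gop that by blast
  qed
  have dense_iff: "(top_of_set X) closure_of S = X \<longleftrightarrow>
     (\<forall>U. openin (top_of_set X) U \<and> U \<noteq> {} \<longrightarrow> S \<inter> U \<noteq> {})" for S
    using dense_intersects_open[of "top_of_set X" S] by simp
  have d12: "(top_of_set X) closure_of ?Tr = X" if tr: "transitive_wrt ?D X T"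
  proof -
    have "compact_space (top_of_set X)" by (simp add: compact_space_subtopology cX)
    then have lc: "locally_compact_space (top_of_set X) \<and> regular_space (top_of_set X)"
      using compact_imp_locally_compact_space regular_space_subtopology[OF regular_space_euclidean]
      by blast
    have "(top_of_set X) closure_of S = X" if S: "S \<in> \<G>" for S
    proof (cases "S = X")
      case True then show ?thesis by (metis closure_of_topspace topspace_euclidean_subtopology)
    next
      case False
      then obtain B H where BH: "B \<in> \<B>" "H \<in> \<H>" "S = G B H" using S unfolding \<G>_def by auto
      show ?thesis unfolding dense_iff
      proof (intro allI impI)
        fix V assume V: "openin (top_of_set X) V \<and> V \<noteq> {}"
        have "N_T T V B \<in> ?D" using tr V B(2)[OF BH(1)] unfolding transitive_wrt_def by blast
        then have "N_T T V B \<inter> H \<noteq> {}" using H(2) BH(2) by (auto simp: dual_family_def)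
        then obtain n y where "n \<in> H" "y \<in> V" "(T^^n) y \<in> B" by (auto simp: N_T_def)
        moreover have "V \<subseteq> X" using V openin_subset by fastforce
        ultimately show "S \<inter> V \<noteq> {}" unfolding BH G_def by blast
      qed
    qed
    then have "(top_of_set X) closure_of \<Inter>\<G> = topspace (top_of_set X)"
      by (intro Baire_category) (use lc cnt Gop in auto)
    then show ?thesis using TrEq by simp
  qed
  have d21: "transitive_wrt ?D X T" if dn: "(top_of_set X) closure_of ?Tr = X"
    unfolding transitive_wrt_def
  proof (intro allI impI)
    fix U V assume UV: "openin (top_of_set X) U \<and> U \<noteq> {} \<and> openin (top_of_set X) V \<and> V \<noteq> {}"
    then obtain x where x: "x \<in> ?Tr" "x \<in> U" using dn unfolding dense_iff by blast
    then have "n_T T x V \<in> ?D" using UV by (simp add: Tran_def)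
    moreover have "n_T T x V \<subseteq> N_T T U V" using x(2) by (auto simp: n_T_def N_T_def)
    ultimately show "N_T T U V \<in> ?D" using Dup by blast
  qed
  have d23: "?Tr \<noteq> {}" if dn: "(top_of_set X) closure_of ?Tr = X"
    using dn Xne by (metis closure_of_empty)
  have d32: "(top_of_set X) closure_of ?Tr = X" if ne: "?Tr \<noteq> {}"
  proof (cases "F = {}")
    case True
    then have "?Tr = X" by (auto simp: Tran_def dual_family_def)
    then show ?thesis by (metis closure_of_topspace topspace_euclidean_subtopology)
  next
    case False
    then obtain F' where F': "F' \<in> F" by blast
    obtain x where x: "x \<in> ?Tr" using ne by blast
    then have xX: "x \<in> X" by (simp add: Tran_def)
    have orb: "(T^^m) x \<in> ?Tr" for m
    proof -
      have "n_T T ((T^^m) x) U \<in> ?D" if U: "openin (top_of_set X) U" "U \<noteq> {}" for U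
      proof -
        let ?V = "X \<inter> (T^^m) -` U"
        have comm: "(T^^n) ((T^^m) x) = (T^^m) ((T^^n) x)" for n
          by (metis add.commute comp_apply funpow_add)
        have eq: "n_T T ((T^^m) x) U = n_T T x ?V"
          unfolding n_T_def using comm inX[OF xX] by auto
        have "openin (top_of_set X) ?V"
          by (rule continuous_openin_preimage[of X "T^^m" X]) (use iter inX U in auto)
        moreover have "?V \<noteq> {}"
        proof -
          obtain u where "u \<in> U" using U by blast
          moreover have "U \<subseteq> X" using U openin_subset by fastforce
          ultimately obtain v where "v \<in> X" "(T^^m) v = u" using iter[of m] by (metis imageE subsetD)
          then show ?thesis using \<open>u \<in> U\<close> by blast
        qed
        ultimately have "n_T T x ?V \<in> ?D" using x by (simp add: Tran_def)
        then show ?thesis using eq by simp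
      qed
      then show ?thesis using inX[OF xX] by (simp add: Tran_def)
    qed
    show ?thesis unfolding dense_iff
    proof (intro allI impI)
      fix U assume U: "openin (top_of_set X) U \<and> U \<noteq> {}"
      then have "n_T T x U \<in> ?D" using x by (simp add: Tran_def)
      then have "n_T T x U \<inter> F' \<noteq> {}" using F' by (auto simp: dual_family_def)
      then obtain n where "(T^^n) x \<in> U" by (auto simp: n_T_def)
      then show "?Tr \<inter> U \<noteq> {}" using orb by blast
    qed
  qed
  show ?thesis using gd d12 d21 d23 d32 by blast
qed

end
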